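(* Every finite semigroup divides $FT_2$, i.e. is a homomorphic image of a subsemigroup of $FT_2$.
   Context: Let $X$ be a set with two elements and $1\notin X$. Elements of height $\ge 2$ are triples $h=(h^l,h^c,h^r)$; $\Gamma_0(X)=\{1\}$, $\Gamma_1(X)=X$, each $x\in X$ identified with $(1,x,1)$; for $j\ge 2$, $\Gamma_j(X)$ is the set of triples $h\in\Gamma_{j-1}(X)\times\Gamma_{j-2}(X)\times\Gamma_{j-1}(X)$ with $h^l\neq h^r$ and $h^c\in\{(h^l)^l,(h^l)^r\}\cap\{(h^r)^l,(h^r)^r\}$; $\Gamma(X)=\bigcup_{j\ge0}\Gamma_j(X)$. Let $\rho$ be the smallest congruence on $\Gamma(X)^+$ containing $(1h,h),(h1,h),(hh,h)$ for $h\in\Gamma(X)$ and $(h^ch^lh,h)$, $(hh^rh^c,h)$, $(h^rh^chh^ch^l,h^rh^ch^l)$ for $h\in\Gamma_j(X)$, $j\ge2$. $FT_2=(\Gamma(X)^+/\rho)\setminus\{[1]\}$. *)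

theory Defs
  imports "HOL-Algebra.Group"
begin

text \<open>Elements of Gamma(X) for X a two-element set (represented by bool), with 1 not in X.
  A generator x is identified with the triple (1,x,1).\<close>
datatype gt = One | Gen bool | Node gt gt gt

fun lft :: "gt \<Rightarrow> gt" where
  "lft (Node l c r) = l" | "lft (Gen x) = One" | "lft One = One"
fun ctr :: "gt \<Rightarrow> gt" where
  "ctr (Node l c r) = c" | "ctr (Gen x) = Gen x" | "ctr One = One"
fun rgt :: "gt \<Rightarrow> gt" where
  "rgt (Node l c r) = r" | "rgt (Gen x) = One" | "rgt One = One"

inductive Gam :: "nat \<Rightarrow> gt \<Rightarrow> bool" where
  Gam0: "Gam 0 One"
| Gam1: "Gam 1 (Gen x)"
| GamS: "\<lbrakk> Gam (Suc j) l; Gam j c; Gam (Suc j) r; l \<noteq> r;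
           c \<in> {lft l, rgt l} \<inter> {lft r, rgt r} \<rbrakk> \<Longrightarrow> Gam (Suc (Suc j)) (Node l c r)"

definition Gamma :: "gt set" where
  "Gamma = {h. \<exists>j. Gam j h}"

definition Gplus :: "gt list set" where
  "Gplus = {w. w \<noteq> [] \<and> set w \<subseteq> Gamma}"

inductive rho :: "gt list \<Rightarrow> gt list \<Rightarrow> bool" where
  gen_1l: "h \<in> Gamma \<Longrightarrow> rho [One, h] [h]"
| gen_1r: "h \<in> Gamma \<Longrightarrow> rho [h, One] [h]"
| gen_idem: "h \<in> Gamma \<Longrightarrow> rho [h, h] [h]"
| gen_cl: "Gam j h \<Longrightarrow> j \<ge> 2 \<Longrightarrow> rho [ctr h, lft h, h] [h]"
| gen_rc: "Gam j h \<Longrightarrow> j \<ge> 2 \<Longrightarrow> rho [h, rgt h, ctr h] [h]"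
| gen_long: "Gam j h \<Longrightarrow> j \<ge> 2 \<Longrightarrow>
     rho [rgt h, ctr h, h, ctr h, lft h] [rgt h, ctr h, lft h]"
| refl: "w \<in> Gplus \<Longrightarrow> rho w w"
| sym: "rho u v \<Longrightarrow> rho v u"
| trans: "rho u v \<Longrightarrow> rho v w \<Longrightarrow> rho u w"
| cong_l: "rho u v \<Longrightarrow> w \<in> Gplus \<Longrightarrow> rho (w @ u) (w @ v)"
| cong_r: "rho u v \<Longrightarrow> w \<in> Gplus \<Longrightarrow> rho (u @ w) (v @ w)"

definition rhoR :: "(gt list \<times> gt list) set" where
  "rhoR = {(u, v). rho u v}"

text \<open>FT_2 = (Gamma(X)^+ / rho) minus the class of the word 1, with multiplication of classes
  induced by concatenation. The unit field of the record is irrelevant.\<close>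
definition FT2 :: "gt list set monoid" where
  "FT2 = \<lparr> carrier = (Gplus // rhoR) - {rhoR `` {[One]}},
          mult = (\<lambda>A B. \<Union>{rhoR `` {a @ b} | a b. a \<in> A \<and> b \<in> B}),
          one = {} \<rparr>"

definition is_semigroup :: "('a, 'b) monoid_scheme \<Rightarrow> bool" where
  "is_semigroup S \<longleftrightarrow>
     (\<forall>x\<in>carrier S. \<forall>y\<in>carrier S. x \<otimes>\<^bsub>S\<^esub> y \<in> carrier S) \<and>
     (\<forall>x\<in>carrier S. \<forall>y\<in>carrier S. \<forall>z\<in>carrier S.
        (x \<otimes>\<^bsub>S\<^esub> y) \<otimes>\<^bsub>S\<^esub> z = x \<otimes>\<^bsub>S\<^esub> (y \<otimes>\<^bsub>S\<^esub> z))"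

definition divides_sg :: "('a, 'c) monoid_scheme \<Rightarrow> ('b, 'd) monoid_scheme \<Rightarrow> bool" where
  "divides_sg S T \<longleftrightarrow>
     (\<exists>U f. U \<subseteq> carrier T \<and> (\<forall>a\<in>U. \<forall>b\<in>U. a \<otimes>\<^bsub>T\<^esub> b \<in> U) \<and>
            f ` U = carrier S \<and>
            (\<forall>a\<in>U. \<forall>b\<in>U. f (a \<otimes>\<^bsub>T\<^esub> b) = f a \<otimes>\<^bsub>S\<^esub> f b))"

end

theory Submission
  imports Defs
begin

datatype st = St "bool list" bool

fun gam :: "st \<Rightarrow> st" where "gam (St w t) = St w True"
fun bet :: "st \<Rightarrow> st" where "bet (St w t) = St (if t then tl w else w) False"
fun E0 :: "st \<Rightarrow> st" where "E0 (St w t) = St (False # (if t then tl w else w)) True"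
fun alp :: "st \<Rightarrow> st" where "alp (St w t) = St w False"
fun W1 :: "st \<Rightarrow> st" where "W1 (St w t) = St (False # w) True"
fun W3 :: "st \<Rightarrow> st" where "W3 (St w t) = St (True # tl w) True"

definition ginv :: "(st \<Rightarrow> st) \<Rightarrow> st \<Rightarrow> st" where
  "ginv f = (let y0 = (\<lambda>z. if \<exists>x. f x = z then (SOME x. f x = z) else z) in y0 \<circ> f \<circ> y0)"

lemma ginv_inv: "f (ginv f (f x)) = f x \<and> ginv f (f (ginv f x)) = ginv f x"
proof -
  define y0 where "y0 = (\<lambda>z. if \<exists>x. f x = z then (SOME x. f x = z) else z)"
  have key: "f (y0 (f u)) = f u" for u
  proof -
    have "\<exists>x. f x = f u" by blast
    then have "f (SOME x. f x = f u) = f u" by (rule someI_ex)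
    then show ?thesis by (auto simp: y0_def)
  qed
  have g: "ginv f z = y0 (f (y0 z))" for z by (simp add: ginv_def y0_def Let_def)
  show ?thesis by (simp add: g key)
qed

definition minv :: "(st \<Rightarrow> st) \<Rightarrow> st \<Rightarrow> st" where
  "minv f = (if f = bet \<circ> gam then W1 else if f = gam \<circ> bet then alp
             else if f = E0 \<circ> gam then W3 else ginv f)"

lemma minv_inv: "f (minv f (f x)) = f x \<and> minv f (f (minv f x)) = minv f x"
proof -
  consider "f = bet \<circ> gam" | "f \<noteq> bet \<circ> gam" "f = gam \<circ> bet"
    | "f \<noteq> bet \<circ> gam" "f \<noteq> gam \<circ> bet" "f = E0 \<circ> gam"
    | "f \<noteq> bet \<circ> gam" "f \<noteq> gam \<circ> bet" "f \<noteq> E0 \<circ> gam" by blast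
  then show ?thesis
  proof cases
    case 1
    then have m: "minv f = W1" by (simp add: minv_def)
    show ?thesis using 1 m by (cases x) simp
  next
    case 2
    then have m: "minv f = alp" by (simp add: minv_def)
    show ?thesis using 2(2) m by (cases x) simp
  next
    case 3
    then have m: "minv f = W3" by (simp add: minv_def)
    show ?thesis using 3(3) m by (cases x) simp
  next
    case 4
    then have m: "minv f = ginv f" by (simp add: minv_def)
    show ?thesis using m ginv_inv by simp
  qed
qed

fun sig :: "gt \<Rightarrow> st \<Rightarrow> st" where
  "sig One = id"
| "sig (Gen x) = (if x then gam else bet)"
| "sig (Node l c r) = (let Q = sig c \<circ> sig l; R = sig r \<circ> sig c in Q \<circ> minv (R \<circ> Q) \<circ> R)"

definition idem :: "(st \<Rightarrow> st) \<Rightarrow> bool" where "idem f \<longleftrightarrow> (\<forall>x. f (f x) = f x)"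

definition Inv :: "gt \<Rightarrow> bool" where
  "Inv h \<longleftrightarrow> idem (sig h) \<and> (\<forall>c\<in>{lft h, rgt h}. idem (sig c \<circ> sig h) \<and> idem (sig h \<circ> sig c))"

definition rel :: "gt \<Rightarrow> bool" where
  "rel h \<longleftrightarrow> (\<forall>x. sig (ctr h) (sig (lft h) (sig h x)) = sig h x) \<and>
     (\<forall>x. sig h (sig (rgt h) (sig (ctr h) x)) = sig h x) \<and>
     (\<forall>x. sig (rgt h) (sig (ctr h) (sig h (sig (ctr h) (sig (lft h) x)))) =
          sig (rgt h) (sig (ctr h) (sig (lft h) x)))"

lemma main: "Gam j h \<Longrightarrow> Inv h \<and> (2 \<le> j \<longrightarrow> rel h)"
proof (induction rule: Gam.induct)
  case Gam0
  then show ?case by (simp add: Inv_def idem_def)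
next
  case (Gam1 x)
  have "idem (sig (Gen x))"
    unfolding idem_def proof
    fix y show "sig (Gen x) (sig (Gen x) y) = sig (Gen x) y" by (cases y) auto
  qed
  then show ?case by (simp add: Inv_def idem_def)
next
  case (GamS j l c r)
  from GamS.IH have Il: "Inv l" and Ic: "Inv c" and Ir: "Inv r" by auto
  have cl: "c \<in> {lft l, rgt l}" and cr: "c \<in> {lft r, rgt r}" using GamS.hyps(5) by auto
  have cc: "\<And>x. sig c (sig c x) = sig c x" using Ic by (simp add: Inv_def idem_def)
  have "idem (sig c \<circ> sig l)" using Il cl unfolding Inv_def by blast
  then have Qi: "\<And>x. sig c (sig l (sig c (sig l x))) = sig c (sig l x)" by (simp add: idem_def)
  have "idem (sig r \<circ> sig c)" using Ir cr unfolding Inv_def by blast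
  then have Ri: "\<And>x. sig r (sig c (sig r (sig c x))) = sig r (sig c x)" by (simp add: idem_def)
  define W where "W = minv (sig r \<circ> sig c \<circ> (sig c \<circ> sig l))"
  have sN: "\<And>x. sig (Node l c r) x = sig c (sig l (W (sig r (sig c x))))"
    by (simp add: W_def Let_def)
  have w1: "sig r (sig c (sig l (W (sig r (sig c (sig l y)))))) = sig r (sig c (sig l y))" for y
  proof -
    have "(sig r \<circ> sig c \<circ> (sig c \<circ> sig l)) (W ((sig r \<circ> sig c \<circ> (sig c \<circ> sig l)) y))
       = (sig r \<circ> sig c \<circ> (sig c \<circ> sig l)) y" unfolding W_def using minv_inv by blast
    then show ?thesis by (simp add: cc)
  qed
  have w2: "W (sig r (sig c (sig l (W y)))) = W y" for y
  proof -
    have "W ((sig r \<circ> sig c \<circ> (sig c \<circ> sig l)) (W y)) = W y"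
      unfolding W_def using minv_inv by blast
    then show ?thesis by (simp add: cc)
  qed
  show ?case
    unfolding Inv_def idem_def rel_def
    by (simp del: sig.simps(3) add: sN Qi Ri w1 w2 cc)
qed

lemma Gam_Gamma: "Gam j h \<Longrightarrow> h \<in> Gamma" by (auto simp: Gamma_def)

lemma One_Gamma: "One \<in> Gamma" using Gam0 Gam_Gamma by blast

lemma Gam_parts: "Gam j h \<Longrightarrow> 2 \<le> j \<Longrightarrow> lft h \<in> Gamma \<and> ctr h \<in> Gamma \<and> rgt h \<in> Gamma"
  by (erule Gam.cases) (auto simp: Gamma_def)

lemma rho_Gplus: "rho u v \<Longrightarrow> u \<in> Gplus \<and> v \<in> Gplus"
proof (induction rule: rho.induct)
  case (gen_cl j h)
  then show ?case using Gam_parts[OF gen_cl(1,2)] Gam_Gamma[OF gen_cl(1)] by (auto simp: Gplus_def)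
next
  case (gen_rc j h)
  then show ?case using Gam_parts[OF gen_rc(1,2)] Gam_Gamma[OF gen_rc(1)] by (auto simp: Gplus_def)
next
  case (gen_long j h)
  then show ?case using Gam_parts[OF gen_long(1,2)] Gam_Gamma[OF gen_long(1)] by (auto simp: Gplus_def)
qed (auto simp: Gplus_def One_Gamma)

definition ev :: "gt list \<Rightarrow> st \<Rightarrow> st" where "ev w = foldr (\<lambda>h f. sig h \<circ> f) w id"

lemma ev_Nil[simp]: "ev [] = id" by (simp add: ev_def)
lemma ev_Cons[simp]: "ev (h # w) = sig h \<circ> ev w" by (simp add: ev_def)
lemma ev_append[simp]: "ev (u @ v) = ev u \<circ> ev v" by (induction u) auto

lemma rho_ev: "rho u v \<Longrightarrow> ev u = ev v"
proof (induction rule: rho.induct)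
  case (gen_idem h)
  then obtain j where "Gam j h" by (auto simp: Gamma_def)
  then have "Inv h" using main by blast
  then show ?case by (simp add: Inv_def idem_def fun_eq_iff)
next
  case (gen_cl j h)
  then have "rel h" using main by blast
  then show ?case by (simp add: rel_def fun_eq_iff)
next
  case (gen_rc j h)
  then have "rel h" using main by blast
  then show ?case by (simp add: rel_def fun_eq_iff)
next
  case (gen_long j h)
  then have "rel h" using main by blast
  then show ?case by (simp add: rel_def fun_eq_iff)
qed auto

definition hab :: gt where "hab = Node (Gen True) One (Gen False)"
definition hba :: gt where "hba = Node (Gen False) One (Gen True)"
definition gg :: gt where "gg = Node hba (Gen True) hab"

lemma Gam1': "Gam (Suc 0) (Gen x)" using Gam1 by simp

lemma Gam_hab: "Gam (Suc (Suc 0)) hab"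
  unfolding hab_def by (rule GamS) (auto intro: Gam1' Gam0)
lemma Gam_hba: "Gam (Suc (Suc 0)) hba"
  unfolding hba_def by (rule GamS) (auto intro: Gam1' Gam0)
lemma Gam_gg: "Gam (Suc (Suc (Suc 0))) gg"
  unfolding gg_def
  apply (rule GamS)
      apply (rule Gam_hba)
     apply (rule Gam1')
    apply (rule Gam_hab)
   apply (simp_all add: hab_def hba_def)
  done

lemma st_ext: "(\<And>w t. f (St w t) = g (St w t)) \<Longrightarrow> f = g"
proof (rule ext)
  fix x assume "\<And>w t. f (St w t) = g (St w t)" then show "f x = g x" by (cases x) auto
qed

lemma neq1: "gam \<circ> bet \<noteq> bet \<circ> gam"
proof
  assume "gam \<circ> bet = bet \<circ> gam"
  then have "(gam \<circ> bet) (St [] True) = (bet \<circ> gam) (St [] True)" by simp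
  then show False by simp
qed
lemma neq2: "E0 \<circ> gam \<noteq> bet \<circ> gam"
proof
  assume "E0 \<circ> gam = bet \<circ> gam"
  then have "(E0 \<circ> gam) (St [] True) = (bet \<circ> gam) (St [] True)" by simp
  then show False by simp
qed
lemma neq3: "E0 \<circ> gam \<noteq> gam \<circ> bet"
proof
  assume "E0 \<circ> gam = gam \<circ> bet"
  then have "(E0 \<circ> gam) (St [] True) = (gam \<circ> bet) (St [] True)" by simp
  then show False by simp
qed

lemma sig_hab: "sig hab = E0"
proof -
  have m: "minv (bet \<circ> gam) = W1" by (simp add: minv_def)
  have "sig hab = gam \<circ> W1 \<circ> bet" by (simp add: hab_def m)
  then show ?thesis by (simp add: st_ext)
qed

lemma sig_hba: "sig hba = alp"
proof -
  have m: "minv (gam \<circ> bet) = alp" using neq1 by (simp add: minv_def)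
  have "sig hba = bet \<circ> alp \<circ> gam" by (simp add: hba_def m)
  then show ?thesis by (simp add: st_ext)
qed

lemma sig_gg: "sig gg = W3"
proof -
  have m: "minv (E0 \<circ> gam) = W3" using neq2 neq3 by (simp add: minv_def)
  have e1: "E0 \<circ> gam \<circ> (gam \<circ> alp) = E0 \<circ> gam" by (rule st_ext) simp
  have "sig gg = gam \<circ> alp \<circ> W3 \<circ> (E0 \<circ> gam)"
    by (simp add: gg_def sig_hab sig_hba e1 m Let_def)
  then show ?thesis by (simp add: st_ext)
qed

fun stk :: "st \<Rightarrow> bool list" where "stk (St w t) = w"

definition cw :: "nat \<Rightarrow> gt list" where
  "cw i = concat (replicate i [hab, hba]) @ [gg, hab, hba]"

lemma ev_rep: "ev (concat (replicate i [hab, hba])) (St v True) = St (replicate i False @ v) True"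
  by (induction i) (auto simp: sig_hab sig_hba)

lemma ev_cw: "ev (cw i) x = St (replicate i False @ True # stk x) True"
  by (cases x) (simp add: cw_def ev_rep sig_hab sig_hba sig_gg)

definition wd :: "nat list \<Rightarrow> gt list" where "wd is = concat (map cw is)"

definition enc :: "nat list \<Rightarrow> bool list" where
  "enc is = concat (map (\<lambda>i. replicate i False @ [True]) is)"

lemma ev_wd: "ev (wd is) (St w True) = St (enc is @ w) True"
  by (induction "is" arbitrary: w) (auto simp: wd_def enc_def ev_cw)

lemma rep_eq: "replicate i False @ True # X = replicate j False @ True # Y \<Longrightarrow> i = j \<and> X = Y"
proof (induction i arbitrary: j)
  case 0 then show ?case by (cases j) auto
next
  case (Suc i) then show ?case by (cases j) auto
qed

lemma enc_inj: "enc xs = enc js \<Longrightarrow> xs = js"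
proof (induction xs arbitrary: js)
  case Nil then show ?case by (cases js) (auto simp: enc_def)
next
  case (Cons i xs)
  then show ?case
  proof (cases js)
    case Nil then show ?thesis using Cons by (auto simp: enc_def)
  next
    case (Cons j js')
    with Cons.prems have "replicate i False @ True # enc xs = replicate j False @ True # enc js'"
      by (simp add: enc_def)
    then have "i = j \<and> enc xs = enc js'" by (rule rep_eq)
    then show ?thesis using Cons.IH Cons by auto
  qed
qed

lemma wd_append: "wd (is @ js) = wd is @ wd js" by (simp add: wd_def)

lemma wd_Gplus: "is \<noteq> [] \<Longrightarrow> wd is \<in> Gplus"
proof -
  assume "is \<noteq> []"
  have G: "hab \<in> Gamma" "hba \<in> Gamma" "gg \<in> Gamma"
    using Gam_hab Gam_hba Gam_gg Gam_Gamma by blast+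
  have "set (cw i) \<subseteq> Gamma" for i using G by (auto simp: cw_def)
  then have "set (wd is) \<subseteq> Gamma" by (auto simp: wd_def)
  moreover have "wd is \<noteq> []" using \<open>is \<noteq> []\<close> by (cases "is") (auto simp: wd_def cw_def)
  ultimately show ?thesis by (simp add: Gplus_def)
qed

fun sprod :: "('a, 'b) monoid_scheme \<Rightarrow> 'a list \<Rightarrow> 'a" where
  "sprod S [] = undefined"
| "sprod S [x] = x"
| "sprod S (x # y # ys) = x \<otimes>\<^bsub>S\<^esub> sprod S (y # ys)"

lemma sprod_closed: "is_semigroup S \<Longrightarrow> xs \<noteq> [] \<Longrightarrow> set xs \<subseteq> carrier S \<Longrightarrow> sprod S xs \<in> carrier S"
  by (induction S xs rule: sprod.induct) (auto simp: is_semigroup_def)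

lemma sprod_append: "is_semigroup S \<Longrightarrow> xs \<noteq> [] \<Longrightarrow> ys \<noteq> [] \<Longrightarrow> set xs \<subseteq> carrier S \<Longrightarrow>
   set ys \<subseteq> carrier S \<Longrightarrow> sprod S (xs @ ys) = sprod S xs \<otimes>\<^bsub>S\<^esub> sprod S ys"
proof (induction xs)
  case Nil
  then show ?case by simp
next
  case (Cons x zs)
  show ?case
  proof (cases zs)
    case Nil
    then show ?thesis using Cons.prems(3) by (cases ys) auto
  next
    case (Cons y zs')
    have ih: "sprod S (zs @ ys) = sprod S zs \<otimes>\<^bsub>S\<^esub> sprod S ys"
      using Cons.IH Cons.prems Cons by simp
    have c: "x \<in> carrier S" "sprod S zs \<in> carrier S" "sprod S ys \<in> carrier S"
      using Cons.prems Cons sprod_closed[of S zs] sprod_closed[of S ys] by auto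
    have A: "\<forall>x\<in>carrier S. \<forall>y\<in>carrier S. \<forall>z\<in>carrier S.
        (x \<otimes>\<^bsub>S\<^esub> y) \<otimes>\<^bsub>S\<^esub> z = x \<otimes>\<^bsub>S\<^esub> (y \<otimes>\<^bsub>S\<^esub> z)"
      using Cons.prems(1) unfolding is_semigroup_def by blast
    have "sprod S ((x # zs) @ ys) = x \<otimes>\<^bsub>S\<^esub> sprod S (zs @ ys)" using Cons by simp
    also have "\<dots> = x \<otimes>\<^bsub>S\<^esub> (sprod S zs \<otimes>\<^bsub>S\<^esub> sprod S ys)" using ih by simp
    also have "\<dots> = (x \<otimes>\<^bsub>S\<^esub> sprod S zs) \<otimes>\<^bsub>S\<^esub> sprod S ys" using A c by simp
    also have "x \<otimes>\<^bsub>S\<^esub> sprod S zs = sprod S (x # zs)" using Cons by simp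
    finally show ?thesis .
  qed
qed

lemma rho_refl_Gplus: "u \<in> Gplus \<Longrightarrow> u \<in> rhoR `` {u}"
  by (simp add: rhoR_def rho.refl)

lemma cls_eq: "rho u a \<Longrightarrow> rhoR `` {a} = rhoR `` {u}"
proof -
  assume ua: "rho u a"
  have "rho a y \<longleftrightarrow> rho u y" for y
  proof
    assume "rho a y" then show "rho u y" using ua by (rule rho.trans[rotated])
  next
    assume "rho u y" then show "rho a y" using rho.sym[OF ua] by (rule rho.trans[rotated])
  qed
  then show ?thesis by (auto simp: rhoR_def)
qed

lemma mult_cls: "u \<in> Gplus \<Longrightarrow> v \<in> Gplus \<Longrightarrow>
  mult FT2 (rhoR `` {u}) (rhoR `` {v}) = rhoR `` {u @ v}"
proof -
  assume u: "u \<in> Gplus" and v: "v \<in> Gplus"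
  have "rhoR `` {a @ b} = rhoR `` {u @ v}" if "a \<in> rhoR `` {u}" "b \<in> rhoR `` {v}" for a b
  proof -
    have ra: "rho u a" and rb: "rho v b" using that by (auto simp: rhoR_def)
    have "a \<in> Gplus" using rho_Gplus[OF ra] by simp
    have "rho (u @ v) (a @ v)" by (rule rho.cong_r[OF ra v])
    moreover have "rho (a @ v) (a @ b)" by (rule rho.cong_l[OF rb \<open>a \<in> Gplus\<close>])
    ultimately have "rho (u @ v) (a @ b)" by (rule rho.trans)
    then show ?thesis by (rule cls_eq)
  qed
  then have E: "{rhoR `` {a @ b} | a b. a \<in> rhoR `` {u} \<and> b \<in> rhoR `` {v}} = {rhoR `` {u @ v}}"
    using rho_refl_Gplus[OF u] rho_refl_Gplus[OF v] by blast
  show ?thesis unfolding FT2_def by (simp only: monoid.select_convs E) simp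
qed

theorem corollary6p11:
  fixes S :: "('a, 'b) monoid_scheme"
  assumes "is_semigroup S" and "finite (carrier S)"
  shows "divides_sg S FT2"
proof -
  obtain xs where xs: "set xs = carrier S" using finite_list[OF assms(2)] by blast
  define n where "n = length xs"
  define cls where "cls w = rhoR `` {w}" for w
  define I where "I = {is. is \<noteq> [] \<and> set is \<subseteq> {..<n}}"
  define U where "U = (\<lambda>is. cls (wd is)) ` I"
  define f where "f A = sprod S (map (\<lambda>i. xs ! i) (SOME is. is \<in> I \<and> A = cls (wd is)))" for A
  have K2: "is = js" if "is \<in> I" "js \<in> I" "cls (wd is) = cls (wd js)" for "is" js
  proof -
    have "wd is \<in> Gplus" using that(1) wd_Gplus by (auto simp: I_def)
    then have "wd is \<in> cls (wd is)" unfolding cls_def by (rule rho_refl_Gplus)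
    then have "wd is \<in> cls (wd js)" using that(3) by simp
    then have "rho (wd js) (wd is)" by (simp add: cls_def rhoR_def)
    then have "ev (wd js) = ev (wd is)" by (rule rho_ev)
    then have "ev (wd js) (St [] True) = ev (wd is) (St [] True)" by simp
    then have "enc js = enc is" by (simp add: ev_wd)
    then show ?thesis by (simp add: enc_inj)
  qed
  have K3: "f (cls (wd is)) = sprod S (map (\<lambda>i. xs ! i) is)" if "is \<in> I" for "is"
  proof -
    have "\<exists>js. js \<in> I \<and> cls (wd is) = cls (wd js)" using that by blast
    then have "(SOME js. js \<in> I \<and> cls (wd is) = cls (wd js)) \<in> I \<and>
        cls (wd is) = cls (wd (SOME js. js \<in> I \<and> cls (wd is) = cls (wd js)))"
      by (rule someI_ex)
    then have "(SOME js. js \<in> I \<and> cls (wd is) = cls (wd js)) = is" using K2[OF that] by metis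
    then show ?thesis by (simp add: f_def)
  qed
  have Kset: "set (map (\<lambda>i. xs ! i) is) \<subseteq> carrier S" if "is \<in> I" for "is"
    using that xs by (force simp: I_def n_def)
  have K5: "cls (wd is) \<in> carrier FT2" if "is \<in> I" for "is"
  proof -
    have Gp: "wd is \<in> Gplus" using that wd_Gplus by (auto simp: I_def)
    have "cls (wd is) \<in> Gplus // rhoR" using Gp by (auto simp: cls_def quotient_def)
    moreover have "cls (wd is) \<noteq> rhoR `` {[One]}"
    proof
      assume eq: "cls (wd is) = rhoR `` {[One]}"
      have "[One] \<in> Gplus" using One_Gamma by (simp add: Gplus_def)
      then have "[One] \<in> rhoR `` {[One]}" by (rule rho_refl_Gplus)
      then have "[One] \<in> cls (wd is)" using eq by simp
      then have "rho (wd is) [One]" by (simp add: cls_def rhoR_def)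
      then have "ev (wd is) = ev [One]" by (rule rho_ev)
      then have "ev (wd is) (St [] True) = St [] True" by simp
      then have "enc is = []" by (simp add: ev_wd)
      then show False using that by (cases "is") (auto simp: I_def enc_def)
    qed
    ultimately show ?thesis by (simp add: FT2_def)
  qed
  have Kmult: "cls (wd is) \<otimes>\<^bsub>FT2\<^esub> cls (wd js) = cls (wd (is @ js))" if "is \<in> I" "js \<in> I" for "is" js
    using mult_cls[of "wd is" "wd js"] wd_Gplus that by (auto simp: I_def cls_def wd_append)
  have IappI: "is @ js \<in> I" if "is \<in> I" "js \<in> I" for "is" js using that by (auto simp: I_def)
  show ?thesis
    unfolding divides_sg_def
  proof (intro exI[of _ U] exI[of _ f] conjI ballI)
    show "U \<subseteq> carrier FT2" using K5 by (auto simp: U_def)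
  next
    fix a b assume "a \<in> U" "b \<in> U"
    then obtain "is" js where "is \<in> I" "js \<in> I" "a = cls (wd is)" "b = cls (wd js)" by (auto simp: U_def)
    then show "a \<otimes>\<^bsub>FT2\<^esub> b \<in> U" using Kmult IappI by (auto simp: U_def)
  next
    fix a b assume "a \<in> U" "b \<in> U"
    then obtain "is" js where ij: "is \<in> I" "js \<in> I" "a = cls (wd is)" "b = cls (wd js)" by (auto simp: U_def)
    have "f (a \<otimes>\<^bsub>FT2\<^esub> b) = sprod S (map (\<lambda>i. xs ! i) (is @ js))"
      using ij Kmult IappI K3 by simp
    also have "\<dots> = sprod S (map (\<lambda>i. xs ! i) is) \<otimes>\<^bsub>S\<^esub> sprod S (map (\<lambda>i. xs ! i) js)"
      using sprod_append[OF assms(1)] Kset ij by (auto simp: I_def)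
    finally show "f (a \<otimes>\<^bsub>FT2\<^esub> b) = f a \<otimes>\<^bsub>S\<^esub> f b" using ij K3 by simp
  next
    show "f ` U = carrier S"
    proof
      show "f ` U \<subseteq> carrier S"
      proof
        fix y assume "y \<in> f ` U"
        then obtain "is" where "is \<in> I" "y = f (cls (wd is))" by (auto simp: U_def)
        then show "y \<in> carrier S" using K3 Kset sprod_closed[OF assms(1)] by (auto simp: I_def)
      qed
    next
      show "carrier S \<subseteq> f ` U"
      proof
        fix s assume "s \<in> carrier S"
        then have "s \<in> set xs" using xs by simp
        then obtain i where i: "i < n" "s = xs ! i" by (metis in_set_conv_nth n_def)
        then have "[i] \<in> I" by (simp add: I_def)
        then have "f (cls (wd [i])) = s" using K3 i by simp
        then show "s \<in> f ` U" using \<open>[i] \<in> I\<close> by (auto simp: U_def)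
      qed
    qed
  qed
qed

end
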